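(* For $n\ge0$ let $A(n)$ be the number of partitions of $n$ into parts congruent to $0,2,3,4$ or $7$ modulo $8$, and let $B(n)$ be the number of partitions of $n$ in which every part is at least $2$ and every odd part exceeds every other part not exceeding it by at least $3$ (i.e. if $b$ is an odd part and $c\le b$ is any other part, then $b-c\ge3$). Then $A(n)=B(n)$ for all $n\ge0$. *)

theory Defs
  imports Main "HOL-Library.Multiset"
begin

definition partitions :: "nat \<Rightarrow> nat multiset set" where
  "partitions n = {p. (\<forall>x\<in>#p. 0 < x) \<and> sum_mset p = n}"

definition A_count :: "nat \<Rightarrow> nat" where
  "A_count n = card {p \<in> partitions n. \<forall>x\<in>#p. x mod 8 \<in> {0,2,3,4,7}}"

text \<open>B(n): partitions of n with all parts at least 2, such that for every odd part b
  and every other part c (another element of the multiset, i.e. p minus one copy of b)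
  with c \<le> b we have b - c \<ge> 3.\<close>
definition B_count :: "nat \<Rightarrow> nat" where
  "B_count n = card {p \<in> partitions n. (\<forall>x\<in>#p. 2 \<le> x) \<and>
      (\<forall>b\<in>#p. odd b \<longrightarrow> (\<forall>c\<in>#(p - {#b#}). c \<le> b \<longrightarrow> c + 3 \<le> b))}"

end

theory Submission
  imports Defs "HOL-Computational_Algebra.Formal_Power_Series"
begin
unbundle fps_syntax


definition geo :: "nat \<Rightarrow> int fps" where
  "geo k = Abs_fps (\<lambda>i. if k dvd i then 1 else 0)"

lemma geo_rec: "0 < k \<Longrightarrow> geo k = 1 + fps_X^k * geo k"
proof (rule fps_ext)
  fix n assume k: "0 < k"
  show "geo k $ n = (1 + fps_X^k * geo k) $ n"
  proof (cases "n < k")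
    case True
    then have "k dvd n \<longleftrightarrow> n = 0" using k by (auto dest: dvd_imp_le)
    then show ?thesis using True by (simp add: geo_def fps_X_power_mult_nth)
  next
    case False
    then have "k dvd n \<longleftrightarrow> k dvd (n - k)" by (simp add: dvd_minus_self)
    then show ?thesis using False k by (simp add: geo_def fps_X_power_mult_nth)
  qed
qed

lemma geo_inv: "0 < k \<Longrightarrow> (1 - fps_X^k) * geo k = 1"
proof -
  assume k: "0 < k"
  have "(1 - fps_X^k) * geo k = geo k - fps_X^k * geo k" by (simp add: algebra_simps)
  also have "\<dots> = 1" by (subst (1) geo_rec[OF k]) simp
  finally show ?thesis .
qed

definition cnt :: "nat set \<Rightarrow> nat \<Rightarrow> nat" where
  "cnt K n = card {E. set_mset E \<subseteq> K \<and> sum_mset E = n}"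

lemma mem_le_sum_mset: "x \<in># E \<Longrightarrow> x \<le> sum_mset (E::nat multiset)"
  by (metis le_add1 multi_member_split sum_mset.add_mset)

lemma size_le_sum_mset: "\<forall>x\<in>#E. (1::nat) \<le> x \<Longrightarrow> size E \<le> sum_mset E"
  by (induction E) auto

lemma fin_cnt: "0 \<notin> (K::nat set) \<Longrightarrow> finite {E. set_mset E \<subseteq> K \<and> sum_mset E = n}"
proof -
  assume K: "0 \<notin> K"
  have "{E. set_mset E \<subseteq> K \<and> sum_mset E = n} \<subseteq> (\<Union>m\<in>{..n}. multisets_of_size {1..n} m)"
  proof
    fix E assume E: "E \<in> {E. set_mset E \<subseteq> K \<and> sum_mset E = n}"
    then have a: "\<forall>x\<in>#E. 1 \<le> x" using K by (auto simp: Suc_le_eq intro!: gr0I)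
    then have "size E \<le> n" using size_le_sum_mset E by auto
    moreover have "set_mset E \<subseteq> {1..n}" using a E mem_le_sum_mset by fastforce
    ultimately show "E \<in> (\<Union>m\<in>{..n}. multisets_of_size {1..n} m)"
      by (auto simp: multisets_of_size_def)
  qed
  moreover have "finite (\<Union>m\<in>{..n}. multisets_of_size {1..n} m)" by auto
  ultimately show ?thesis by (rule finite_subset)
qed

lemma cnt_rec:
  assumes "k \<notin> K" "0 < k" "0 \<notin> K"
  shows "cnt (insert k K) n = cnt K n + (if k \<le> n then cnt (insert k K) (n-k) else 0)"
proof -
  let ?A = "{E. set_mset E \<subseteq> K \<and> sum_mset E = n}"
  let ?B = "{E. set_mset E \<subseteq> insert k K \<and> sum_mset E = n \<and> k \<in># E}"
  let ?C = "{E. set_mset E \<subseteq> insert k K \<and> sum_mset E = n - k}"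
  have K0: "0 \<notin> insert k K" using assms by auto
  have split: "{E. set_mset E \<subseteq> insert k K \<and> sum_mset E = n} = ?A \<union> ?B" by auto
  have disj: "?A \<inter> ?B = {}" using assms(1) by auto
  have fA: "finite ?A" using fin_cnt assms(3) by blast
  have fB: "finite ?B" by (rule finite_subset[OF _ fin_cnt[OF K0, of n]]) auto
  have cB: "card ?B = (if k \<le> n then cnt (insert k K) (n-k) else 0)"
  proof (cases "k \<le> n")
    case True
    have "?B = add_mset k ` ?C"
    proof
      show "?B \<subseteq> add_mset k ` ?C"
      proof
        fix E assume "E \<in> ?B"
        then have E: "set_mset E \<subseteq> insert k K" "sum_mset E = n" "k \<in># E" by auto
        define E' where "E' = E - {#k#}"
        have EE: "E = add_mset k E'" using E(3) by (simp add: E'_def insert_DiffM)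
        have "set_mset E' \<subseteq> insert k K" using E(1) by (auto simp: E'_def dest: in_diffD)
        moreover have "sum_mset E' = n - k" using E(2) EE by simp
        ultimately show "E \<in> add_mset k ` ?C" using EE by auto
      qed
      show "add_mset k ` ?C \<subseteq> ?B" using True by auto
    qed
    then have "card ?B = card ?C" by (simp add: card_image inj_on_def)
    then show ?thesis using True by (simp add: cnt_def)
  next
    case False
    have "?B = {}"
    proof (rule ccontr)
      assume "?B \<noteq> {}"
      then obtain E where "E \<in> ?B" by blast
      then show False using False mem_le_sum_mset by fastforce
    qed
    then show ?thesis using False by (metis card.empty)
  qed
  show ?thesis unfolding cnt_def[of "insert k K"] split
    using card_Un_disjoint[OF fA fB disj] cB by (simp add: cnt_def)
qed

lemma cnt_empty: "cnt {} n = (if n = 0 then 1 else 0)"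
proof -
  have "{E. set_mset E \<subseteq> {} \<and> sum_mset E = n} = (if n = 0 then {{#}} else {})" by auto
  then show ?thesis by (simp add: cnt_def)
qed

lemma coeff_prod: "finite K \<Longrightarrow> 0 \<notin> K \<Longrightarrow> (\<Prod>k\<in>K. geo k) $ n = int (cnt K n)"
proof (induction K arbitrary: n rule: finite_induct)
  case empty
  then show ?case by (simp add: cnt_empty)
next
  case (insert k K)
  have k: "0 < k" using insert.prems by auto
  have K0: "0 \<notin> K" using insert.prems by auto
  define F where "F = (\<Prod>k\<in>K. geo k)"
  define G where "G = geo k * F"
  have GP: "(\<Prod>k\<in>insert k K. geo k) = G" using insert.hyps by (simp add: G_def F_def)
  have Geq: "G = F + fps_X^k * G" unfolding G_def
    by (subst (1) geo_rec[OF k]) (simp add: algebra_simps)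
  have "G $ m = int (cnt (insert k K) m)" for m
  proof (induction m rule: less_induct)
    case (less m)
    have "G $ m = F $ m + (if m < k then 0 else G $ (m - k))"
      by (subst Geq) (simp add: fps_X_power_mult_nth)
    also have "\<dots> = int (cnt K m) + (if k \<le> m then int (cnt (insert k K) (m - k)) else 0)"
      using insert.IH[OF K0] less k by (auto simp: F_def)
    also have "\<dots> = int (cnt (insert k K) m)"
      using cnt_rec[OF insert.hyps(2) k K0, of m] by auto
    finally show ?case .
  qed
  then show ?case using GP by simp
qed



fun Tq :: "nat \<Rightarrow> nat \<Rightarrow> int fps" where
  "Tq 0 c = (if c = 0 then 1 else 0)"
| "Tq (Suc a) 0 = 1"
| "Tq (Suc a) (Suc c) = Tq a (Suc c) + fps_X^(4*a+3) * Tq a c"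

lemma Tq_0 [simp]: "Tq a 0 = 1"
  by (cases a) auto

lemma Tq_zero: "a < c \<Longrightarrow> Tq a c = 0"
proof (induction a arbitrary: c)
  case 0 then show ?case by simp
next
  case (Suc a)
  then obtain c' where "c = Suc c'" by (cases c) auto
  then show ?case using Suc by simp
qed

lemma alg1:
  fixes u t1 t0 s a B x3 x4 x7 x8 :: "'a::comm_ring_1"
  assumes F1: "u * (1 - a*x8) = a*x7*(1 - B*x4)*s"
    and F2: "t1*(1 - a*x4) = a*x3*(1 - B*x4)*t0"
    and F3: "t1 = s + B*x3*t0"
  shows "(u + B*x7*t1)*(1 - a*x8) = a*x7*(1 - B*x8)*t1"
proof -
  have "(u + B*x7*t1)*(1 - a*x8) = u * (1 - a*x8) + B*x7*t1*(1-a*x8)" by (simp add: algebra_simps)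
  also have "\<dots> = a*x7*(1 - B*x4)*(t1 - B*x3*t0) + B*x7*t1*(1-a*x8)" using F1 F3 by simp
  also have "\<dots> = a*x7*(1 - B*x4)*t1 - B*x7*(a*x3*(1 - B*x4)*t0) + B*x7*t1*(1-a*x8)"
    by (simp add: algebra_simps)
  also have "\<dots> = a*x7*(1 - B*x4)*t1 - B*x7*(t1*(1 - a*x4)) + B*x7*t1*(1-a*x8)"
    using F2 by simp
  also have "\<dots> = a*x7*(1 - B*x8)*t1" by (simp add: algebra_simps)
  finally show ?thesis .
qed

lemma Xp: "(fps_X::int fps)^(m+n) = fps_X^m * fps_X^n" by (simp add: power_add)

lemma Tq_P2: "Tq (Suc b) (Suc c) * (1 - fps_X^(4*c+4)) = fps_X^(4*c+3) * (1 - fps_X^(4*b+4)) * Tq b c"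
proof (induction b arbitrary: c)
  case 0
  then show ?case by (cases c) (auto simp: algebra_simps)
next
  case (Suc b)
  show ?case
  proof (cases c)
    case 0
    have IH: "Tq (Suc b) 1 * (1 - fps_X^4) = fps_X^3 * (1 - fps_X^(4*b+4))"
      using Suc[of 0] by simp
    have "Tq (Suc (Suc b)) (Suc 0) * (1 - fps_X^4) = Tq (Suc b) 1 * (1 - fps_X^4) + fps_X^(4*b+7)*(1 - fps_X^4)"
      by (simp add: algebra_simps numeral_eq_Suc)
    also have "\<dots> = fps_X^3 * (1 - fps_X^(4*b+4)) + fps_X^(4*b+7)*(1 - fps_X^4)" using IH by simp
    also have "\<dots> = fps_X^3 * (1 - fps_X^(4*Suc b+4))"
    proof -
      have e1: "(fps_X::int fps)^(4*b+7) = fps_X^3 * fps_X^(4*b+4)" by (simp add: power_add[symmetric])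
      have e2: "(fps_X::int fps)^(4*Suc b+4) = fps_X^(4*b+4) * fps_X^4" by (simp add: power_add[symmetric])
      show ?thesis unfolding e1 e2 by (simp add: algebra_simps)
    qed
    finally show ?thesis using 0 by simp
  next
    case (Suc c')
    let ?X = "fps_X :: int fps"
    define a where "a = ?X^(4*c')"
    define B where "B = ?X^(4*b)"
    have ea8: "?X^(4*Suc c'+4) = a*?X^8" by (simp add: a_def power_add[symmetric])
    have ea7: "?X^(4*Suc c'+3) = a*?X^7" by (simp add: a_def power_add[symmetric])
    have ea4: "?X^(4*c'+4) = a*?X^4" by (simp add: a_def power_add[symmetric])
    have ea3: "?X^(4*c'+3) = a*?X^3" by (simp add: a_def power_add[symmetric])
    have eb4: "?X^(4*b+4) = B*?X^4" by (simp add: B_def power_add[symmetric])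
    have eb3: "?X^(4*b+3) = B*?X^3" by (simp add: B_def power_add[symmetric])
    have eb7: "?X^(4*Suc b+3) = B*?X^7" by (simp add: B_def power_add[symmetric])
    have eb8: "?X^(4*Suc b+4) = B*?X^8" by (simp add: B_def power_add[symmetric])
    have F1: "Tq (Suc b) (Suc (Suc c')) * (1 - a*?X^8) = a*?X^7*(1 - B*?X^4) * Tq b (Suc c')"
      using Suc.IH[of "Suc c'"] unfolding ea8 ea7 eb4 .
    have F2: "Tq (Suc b) (Suc c') * (1 - a*?X^4) = a*?X^3*(1 - B*?X^4) * Tq b c'"
      using Suc.IH[of c'] unfolding ea4 ea3 eb4 .
    have F3: "Tq (Suc b) (Suc c') = Tq b (Suc c') + B*?X^3*Tq b c'"
      unfolding Tq.simps(3) eb3 ..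
    have R: "(Tq (Suc b) (Suc (Suc c')) + B*?X^7*Tq (Suc b) (Suc c'))*(1 - a*?X^8)
         = a*?X^7*(1 - B*?X^8)*Tq (Suc b) (Suc c')"
      by (rule alg1[OF F1 F2 F3])
    have L: "Tq (Suc (Suc b)) (Suc (Suc c')) = Tq (Suc b) (Suc (Suc c')) + B*?X^7*Tq (Suc b) (Suc c')"
      unfolding Tq.simps(3)[of "Suc b"] eb7 ..
    show ?thesis unfolding Suc L ea8 ea7 eb8 by (rule R)
  qed
qed



definition Wcl :: "nat \<Rightarrow> nat \<Rightarrow> int fps" where
  "Wcl K c = Tq ((K+1) div 2) c * (\<Prod>i<c. 1 - fps_X^(4*(K div 2)+2-4*i))"

lemma Wcl_0 [simp]: "Wcl K 0 = 1" by (simp add: Wcl_def)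

lemma alg2:
  fixes T1 T0 Q y z3 z4 W :: "'a::comm_ring_1"
  assumes "T1*(1-z4) = z3*(1-W)*T0"
  shows "T1*((1 - y*z4)*Q) = T1*(Q*(1-y)) + (y*z3 - y*z3*W)*(T0*Q)"
proof -
  have "T1*((1 - y*z4)*Q) - T1*(Q*(1-y)) = y*Q*(T1*(1-z4))" by (simp add: algebra_simps)
  also have "\<dots> = y*Q*(z3*(1-W)*T0)" using assms by simp
  also have "\<dots> = (y*z3 - y*z3*W)*(T0*Q)" by (simp add: algebra_simps)
  finally show ?thesis by (simp add: algebra_simps)
qed

lemma prod_shift: "(\<Prod>i<Suc c. 1 - (fps_X::int fps)^(4*(b+1)+2-4*i)) = (1 - fps_X^(4*b+6)) * (\<Prod>i<c. 1 - fps_X^(4*b+2-4*i))"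
proof -
  have "(\<Prod>i<Suc c. 1 - (fps_X::int fps)^(4*(b+1)+2-4*i)) = (1 - fps_X^(4*(b+1)+2-4*0)) * (\<Prod>i<c. 1 - fps_X^(4*(b+1)+2-4*Suc i))"
    by (rule prod.lessThan_Suc_shift)
  moreover have "\<And>i. 4*(b+1)+2-4*Suc i = 4*b+2-4*i" by simp
  ultimately show ?thesis by simp
qed

lemma Wcl_even: "Wcl (2*b+2) (Suc c) = Wcl (2*b+1) (Suc c) + (fps_X^(4*b+5) - fps_X^(8*b+9)) * Wcl (2*b) c"
proof -
  let ?X = "fps_X :: int fps"
  define Q where "Q = (\<Prod>i<c. 1 - ?X^(4*b+2-4*i))"
  have d1: "(2*b+2+1) div 2 = b+1" "(2*b+2) div 2 = b+1" "(2*b+1+1) div 2 = b+1" "(2*b+1) div 2 = b"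
     "(2*b+1) div 2 = b" "(2*b) div 2 = b" by auto
  have h1: "(\<Prod>i<Suc c. 1 - ?X^(4*(b+1)+2-4*i)) = (1 - ?X^(4*b+6)) * Q"
    unfolding Q_def by (rule prod_shift)
  have h2: "(\<Prod>i<Suc c. 1 - ?X^(4*b+2-4*i)) = Q * (1 - ?X^(4*b+2-4*c))"
    unfolding Q_def by simp
  have W1: "Wcl (2*b+2) (Suc c) = Tq (Suc b) (Suc c) * ((1 - ?X^(4*b+6)) * Q)"
    unfolding Wcl_def d1 h1[symmetric] by simp
  have W2: "Wcl (2*b+1) (Suc c) = Tq (Suc b) (Suc c) * (Q * (1 - ?X^(4*b+2-4*c)))"
    unfolding Wcl_def h2[symmetric] by simp
  have W3: "Wcl (2*b) c = Tq b c * Q"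
    unfolding Wcl_def Q_def by simp
  show ?thesis
  proof (cases "c \<le> b")
    case True
    define y where "y = ?X^(4*b+2-4*c)"
    have e1: "?X^(4*b+6) = y * ?X^(4*c+4)" unfolding y_def power_add[symmetric]
      using True by (intro arg_cong[where f="\<lambda>n. ?X^n"]) simp
    have e2: "?X^(4*b+5) = y * ?X^(4*c+3)" unfolding y_def power_add[symmetric]
      using True by (intro arg_cong[where f="\<lambda>n. ?X^n"]) simp
    have e3: "?X^(8*b+9) = y * ?X^(4*c+3) * ?X^(4*b+4)" unfolding y_def power_add[symmetric]
      using True by (intro arg_cong[where f="\<lambda>n. ?X^n"]) simp
    show ?thesis unfolding W1 W2 W3 e1 e2 e3 y_def[symmetric]
      by (rule alg2[OF Tq_P2])
  next
    case False
    then show ?thesis unfolding W1 W2 W3 by (simp add: Tq_zero)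
  qed
qed

lemma Wcl_odd: "Wcl (2*b+3) (Suc c) = Wcl (2*b+2) (Suc c) + (fps_X^(4*b+7) - fps_X^(8*b+13)) * Wcl (2*b+1) c"
proof -
  let ?X = "fps_X :: int fps"
  define Q where "Q = (\<Prod>i<c. 1 - ?X^(4*b+2-4*i))"
  have d1: "(2*b+3+1) div 2 = Suc (Suc b)" "(2*b+3) div 2 = b+1" "(2*b+2+1) div 2 = b+1" "(2*b+2) div 2 = b+1"
     "(2*b+1+1) div 2 = b+1" "(2*b+1) div 2 = b" by auto
  have h1: "(\<Prod>i<Suc c. 1 - ?X^(4*(b+1)+2-4*i)) = (1 - ?X^(4*b+6)) * Q"
    unfolding Q_def by (rule prod_shift)
  have W1: "Wcl (2*b+3) (Suc c) = Tq (Suc (Suc b)) (Suc c) * ((1 - ?X^(4*b+6)) * Q)"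
    unfolding Wcl_def d1 h1[symmetric] by simp
  have W2: "Wcl (2*b+2) (Suc c) = Tq (Suc b) (Suc c) * ((1 - ?X^(4*b+6)) * Q)"
    unfolding Wcl_def d1 h1[symmetric] by simp
  have W3: "Wcl (2*b+1) c = Tq (Suc b) c * Q"
    unfolding Wcl_def Q_def d1 by simp
  have T: "Tq (Suc (Suc b)) (Suc c) = Tq (Suc b) (Suc c) + ?X^(4*b+7) * Tq (Suc b) c"
    unfolding Tq.simps(3)[of "Suc b"] by simp
  have e: "?X^(8*b+13) = ?X^(4*b+7) * ?X^(4*b+6)" unfolding power_add[symmetric] by simp
  show ?thesis unfolding W1 W2 W3 T e by (simp add: algebra_simps)
qed

lemma Wcl_rec: "Wcl (K+2) (Suc c) = Wcl (K+1) (Suc c) + (fps_X^(2*K+5) - fps_X^(4*K+9)) * Wcl K c"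
proof (cases "even K")
  case True
  then obtain b where K: "K = 2*b" by (auto elim: evenE)
  have a: "2*(2*b)+5 = 4*b+5" "4*(2*b)+9 = 8*b+9" by simp_all
  show ?thesis unfolding K a by (rule Wcl_even)
next
  case False
  then obtain b where K: "K = 2*b+1" by (auto elim: oddE)
  have a: "2*b+1+2 = 2*b+3" "2*b+1+1 = 2*b+2" "2*(2*b+1)+5 = 4*b+7" "4*(2*b+1)+9 = 8*b+13" by simp_all
  show ?thesis unfolding K a by (rule Wcl_odd)
qed

lemma Wcl_zero: "K < c \<Longrightarrow> Wcl K c = 0"
  unfolding Wcl_def by (simp add: Tq_zero)

definition Vcl :: "nat \<Rightarrow> int fps" where
  "Vcl K = (\<Sum>c\<le>K. Wcl K c)"

lemma Vcl_ext: "K \<le> N \<Longrightarrow> (\<Sum>c\<le>N. Wcl K c) = Vcl K"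
proof -
  assume "K \<le> N"
  then have "(\<Sum>c\<le>N. Wcl K c) = (\<Sum>c\<le>K. Wcl K c)"
    by (intro sum.mono_neutral_right) (auto simp: Wcl_zero)
  then show ?thesis by (simp add: Vcl_def)
qed

lemma Vcl_rec: "Vcl (K+2) = Vcl (K+1) + (fps_X^(2*K+5) - fps_X^(4*K+9)) * Vcl K"
proof -
  let ?m = "(fps_X^(2*K+5) - fps_X^(4*K+9)) :: int fps"
  have "Vcl (K+2) = Wcl (K+2) 0 + (\<Sum>c\<le>K+1. Wcl (K+2) (Suc c))"
    unfolding Vcl_def by (simp add: sum.atMost_Suc_shift del: sum.atMost_Suc)
  also have "\<dots> = 1 + (\<Sum>c\<le>K+1. Wcl (K+1) (Suc c)) + ?m * (\<Sum>c\<le>K+1. Wcl K c)"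
  proof -
    have "(\<Sum>c\<le>K+1. Wcl (K+2) (Suc c)) = (\<Sum>c\<le>K+1. Wcl (K+1) (Suc c) + ?m * Wcl K c)"
      by (intro sum.cong refl Wcl_rec)
    then show ?thesis by (simp only: sum.distrib sum_distrib_left add.assoc Wcl_0)
  qed
  also have "1 + (\<Sum>c\<le>K+1. Wcl (K+1) (Suc c)) = (\<Sum>c\<le>K+2. Wcl (K+1) c)"
    by (simp add: sum.atMost_Suc_shift del: sum.atMost_Suc)
  also have "\<dots> = Vcl (K+1)" by (rule Vcl_ext) simp
  also have "(\<Sum>c\<le>K+1. Wcl K c) = Vcl K" by (rule Vcl_ext) simp
  finally show ?thesis .
qed

lemma Vcl_0: "Vcl 0 = 1" by (simp add: Vcl_def)
lemma Vcl_1: "Vcl 1 = 1 + fps_X^3 - fps_X^5"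
proof -
  have "Wcl 1 1 = fps_X^3 * (1 - fps_X^2)" by (simp add: Wcl_def numeral_eq_Suc)
  also have "\<dots> = fps_X^3 - fps_X^5" by (simp add: algebra_simps power_add[symmetric])
  finally show ?thesis by (simp add: Vcl_def)
qed



definition Sf :: "nat \<Rightarrow> nat set set" where
  "Sf K = {S. S \<subseteq> {3..2*K+1} \<and> (\<forall>x\<in>S. odd x) \<and> (\<forall>x\<in>S. \<forall>y\<in>S. x < y \<longrightarrow> x + 4 \<le> y)}"

definition Vs :: "nat \<Rightarrow> int fps" where
  "Vs K = (\<Sum>S\<in>Sf K. \<Prod>b\<in>S. fps_X^b - fps_X^(2*b-1))"

lemma Sf_finite: "finite (Sf K)"
  by (rule finite_subset[of _ "Pow {3..2*K+1}"]) (auto simp: Sf_def)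

lemma Sf_elem_finite: "S \<in> Sf K \<Longrightarrow> finite S"
  unfolding Sf_def by (auto intro: finite_subset)

lemma Sf_rec: "Sf (K+2) = Sf (K+1) \<union> insert (2*K+5) ` Sf K"
proof
  show "Sf (K+2) \<subseteq> Sf (K+1) \<union> insert (2*K+5) ` Sf K"
  proof
    fix S assume S: "S \<in> Sf (K+2)"
    show "S \<in> Sf (K+1) \<union> insert (2*K+5) ` Sf K"
    proof (cases "2*K+5 \<in> S")
      case False
      have "S \<subseteq> {3..2*(K+1)+1}"
      proof
        fix x assume x: "x \<in> S"
        then have "x \<le> 2*K+5" "3 \<le> x" "odd x" "x \<noteq> 2*K+5" using S False by (auto simp: Sf_def)
        then show "x \<in> {3..2*(K+1)+1}" by presburger
      qed
      then have "S \<in> Sf (K+1)" using S by (auto simp: Sf_def)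
      then show ?thesis by blast
    next
      case True
      define S' where "S' = S - {2*K+5}"
      have "S' \<subseteq> {3..2*K+1}"
      proof
        fix x assume x: "x \<in> S'"
        then have "x \<in> S" "x \<noteq> 2*K+5" by (auto simp: S'_def)
        then have "x \<le> 2*K+5" "3 \<le> x" "x < 2*K+5 \<longrightarrow> x + 4 \<le> 2*K+5" using S True by (auto simp: Sf_def)
        then show "x \<in> {3..2*K+1}" using \<open>x \<noteq> 2*K+5\<close> by auto
      qed
      then have "S' \<in> Sf K" using S by (auto simp: Sf_def S'_def)
      moreover have "S = insert (2*K+5) S'" using True by (auto simp: S'_def)
      ultimately show ?thesis by blast
    qed
  qed
  show "Sf (K+1) \<union> insert (2*K+5) ` Sf K \<subseteq> Sf (K+2)"
  proof
    fix S assume "S \<in> Sf (K+1) \<union> insert (2*K+5) ` Sf K"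
    then show "S \<in> Sf (K+2)"
    proof
      assume "S \<in> Sf (K+1)" then show ?thesis by (auto simp: Sf_def)
    next
      assume "S \<in> insert (2*K+5) ` Sf K"
      then obtain S' where S': "S' \<in> Sf K" "S = insert (2*K+5) S'" by blast
      have le: "\<forall>x\<in>S'. x \<le> 2*K+1" "\<forall>x\<in>S'. 3 \<le> x" using S'(1) by (auto simp: Sf_def)
      have "S \<subseteq> {3..2*(K+2)+1}" using le S'(2) by auto
      moreover have "\<forall>x\<in>S. odd x" using S' by (auto simp: Sf_def)
      moreover have "\<forall>x\<in>S. \<forall>y\<in>S. x < y \<longrightarrow> x + 4 \<le> y"
      proof (intro ballI impI)
        fix x y assume xy: "x \<in> S" "y \<in> S" "x < y"
        show "x + 4 \<le> y"
        proof (cases "y = 2*K+5")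
          case True
          then have "x \<in> S'" using xy S'(2) by auto
          then show ?thesis using le True by auto
        next
          case False
          then have "y \<in> S'" using xy S'(2) by auto
          then have "y \<le> 2*K+1" using le by auto
          then have "x \<in> S'" using xy S'(2) by auto
          then show ?thesis using \<open>y \<in> S'\<close> xy(3) S'(1) by (auto simp: Sf_def)
        qed
      qed
      ultimately show ?thesis by (auto simp: Sf_def)
    qed
  qed
qed

lemma Sf_notin: "S \<in> Sf K \<Longrightarrow> x \<in> S \<Longrightarrow> x \<le> 2*K+1"
  by (auto simp: Sf_def)

lemma Vs_rec: "Vs (K+2) = Vs (K+1) + (fps_X^(2*K+5) - fps_X^(4*K+9)) * Vs K"
proof -
  let ?f = "\<lambda>S. \<Prod>b\<in>S. (fps_X::int fps)^b - fps_X^(2*b-1)"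
  have disj: "Sf (K+1) \<inter> insert (2*K+5) ` Sf K = {}"
    using Sf_notin[of _ "K+1" "2*K+5"] by force
  have inj: "inj_on (insert (2*K+5)) (Sf K)"
  proof (rule inj_onI)
    fix S T assume "S \<in> Sf K" "T \<in> Sf K" "insert (2*K+5) S = insert (2*K+5) T"
    moreover have "2*K+5 \<notin> S" "2*K+5 \<notin> T" using Sf_notin \<open>S \<in> Sf K\<close> \<open>T \<in> Sf K\<close> by force+
    ultimately show "S = T" by (metis insert_ident)
  qed
  have "Vs (K+2) = sum ?f (Sf (K+1)) + sum ?f (insert (2*K+5) ` Sf K)"
    unfolding Vs_def Sf_rec by (rule sum.union_disjoint[OF Sf_finite _ disj]) (simp add: Sf_finite)
  also have "sum ?f (insert (2*K+5) ` Sf K) = (\<Sum>S\<in>Sf K. ?f (insert (2*K+5) S))"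
    by (rule sum.reindex[OF inj, unfolded comp_def])
  also have "\<dots> = (\<Sum>S\<in>Sf K. (fps_X^(2*K+5) - fps_X^(4*K+9)) * ?f S)"
  proof (rule sum.cong[OF refl])
    fix S assume S: "S \<in> Sf K"
    have "2*K+5 \<notin> S" using Sf_notin[OF S] by force
    then have "?f (insert (2*K+5) S) = (fps_X^(2*K+5) - fps_X^(2*(2*K+5)-1)) * ?f S"
      by (simp add: prod.insert[OF Sf_elem_finite[OF S]])
    moreover have "2*(2*K+5)-1 = 4*K+9" by simp
    ultimately show "?f (insert (2*K+5) S) = (fps_X^(2*K+5) - fps_X^(4*K+9)) * ?f S" by simp
  qed
  finally show ?thesis by (simp add: Vs_def sum_distrib_left)
qed

lemma Sf_0: "Sf 0 = {{}}" by (auto simp: Sf_def)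
lemma Sf_1: "Sf 1 = {{}, {3}}"
proof -
  have "{3..2*1+1} = {3::nat}" by auto
  then show ?thesis unfolding Sf_def by auto
qed

lemma Vs_0: "Vs 0 = 1" by (simp add: Vs_def Sf_0)
lemma Vs_1: "Vs 1 = 1 + fps_X^3 - fps_X^5"
proof -
  have "Vs 1 = (\<Prod>b\<in>{}. (fps_X::int fps)^b - fps_X^(2*b-1)) + (\<Prod>b\<in>{3}. (fps_X::int fps)^b - fps_X^(2*b-1))"
    unfolding Vs_def Sf_1 by (subst sum.insert) auto
  also have "\<dots> = 1 + (fps_X^3 - fps_X^(2*3-1))" by simp
  also have "(2::nat)*3-1 = 5" by simp
  finally show ?thesis by (simp add: algebra_simps)
qed

lemma Vs_Vcl: "Vs K = Vcl K"
proof -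
  have "Vs K = Vcl K \<and> Vs (K+1) = Vcl (K+1)" for K
  proof (induction K)
    case 0 then show ?case using Vs_0 Vs_1 Vcl_0 Vcl_1 by simp
  next
    case (Suc K)
    then show ?case using Vs_rec[of K] Vcl_rec[of K] by simp
  qed
  then show ?thesis by blast
qed

lemma prod_T: "(\<Prod>i<a. 1 + (fps_X::int fps)^(4*i+3)) = (\<Sum>c\<le>a. Tq a c)"
proof (induction a)
  case 0 then show ?case by simp
next
  case (Suc a)
  have s1: "(\<Sum>c\<le>Suc a. Tq (Suc a) c) = 1 + (\<Sum>c\<le>a. Tq (Suc a) (Suc c))"
    by (simp add: sum.atMost_Suc_shift del: sum.atMost_Suc)
  also have "\<dots> = 1 + (\<Sum>c\<le>a. Tq a (Suc c)) + fps_X^(4*a+3) * (\<Sum>c\<le>a. Tq a c)"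
    by (simp add: sum.distrib sum_distrib_left del: sum.atMost_Suc)
  also have "1 + (\<Sum>c\<le>a. Tq a (Suc c)) = (\<Sum>c\<le>Suc a. Tq a c)"
    by (simp add: sum.atMost_Suc_shift del: sum.atMost_Suc)
  also have "\<dots> = (\<Sum>c\<le>a. Tq a c)" by (simp add: Tq_zero)
  finally show ?case using Suc by (simp add: algebra_simps)
qed

definition vb :: "nat \<Rightarrow> int fps \<Rightarrow> bool" where
  "vb d f \<longleftrightarrow> (\<forall>i<d. f $ i = 0)"

lemma vb_mult: "vb d f \<Longrightarrow> vb e g \<Longrightarrow> vb (d+e) (f*g)"
  unfolding vb_def fps_mult_nth
proof (intro allI impI sum.neutral ballI)
  fix n i assume f: "\<forall>i<d. f $ i = 0" and g: "\<forall>i<e. g $ i = 0" and n: "n < d + e" and i: "i \<in> {0..n}"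
  show "f $ i * g $ (n - i) = 0"
  proof (cases "i < d")
    case True then show ?thesis using f by simp
  next
    case False then have "n - i < e" using n i by auto
    then show ?thesis using g by simp
  qed
qed

lemma vb_mono: "vb d f \<Longrightarrow> e \<le> d \<Longrightarrow> vb e f" unfolding vb_def by auto
lemma vb_add: "vb d f \<Longrightarrow> vb d g \<Longrightarrow> vb d (f+g)" unfolding vb_def by auto
lemma vb_diff: "vb d f \<Longrightarrow> vb d g \<Longrightarrow> vb d (f-g)" unfolding vb_def by auto
lemma vb_0: "vb 0 f" unfolding vb_def by auto
lemma vb_zero: "vb d 0" unfolding vb_def by auto
lemma vb_Xp: "e \<le> k \<Longrightarrow> vb e (fps_X^k)" unfolding vb_def by auto
lemma vb_sum: "(\<And>c. c \<in> A \<Longrightarrow> vb d (f c)) \<Longrightarrow> vb d (sum f A)"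
  unfolding vb_def by (auto simp: fps_sum_nth intro: sum.neutral)

lemma vb_mult_left: "vb e g \<Longrightarrow> vb e (f*g)"
  using vb_mult[OF vb_0, of e g f] by simp

lemma Tq_vb: "vb (4*c+3) (Tq a (Suc c))"
proof (induction a arbitrary: c)
  case 0 then show ?case by (simp add: vb_zero)
next
  case (Suc a)
  have "vb (4*c+3) (fps_X^(4*a+3) * Tq a c)"
  proof (cases c)
    case 0 then show ?thesis by (simp add: vb_Xp)
  next
    case (Suc c')
    show ?thesis
    proof (cases a)
      case 0 then show ?thesis using Suc by (simp add: vb_zero)
    next
      case (Suc a')
      have "vb ((4*a+3) + (4*c'+3)) (fps_X^(4*a+3) * Tq a (Suc c'))"
        by (rule vb_mult[OF vb_Xp[OF le_refl] Suc.IH])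
      then show ?thesis using Suc \<open>c = Suc c'\<close> by (auto intro: vb_mono)
    qed
  qed
  then show ?case using Suc.IH by (simp add: vb_add)
qed

lemma prod_minus_one_vb: "(\<And>i. i < (c::nat) \<Longrightarrow> d \<le> e i) \<Longrightarrow> vb d ((\<Prod>i<c. 1 - (fps_X::int fps)^(e i)) - 1)"
proof (induction c)
  case 0 then show ?case by (simp add: vb_zero)
next
  case (Suc c)
  let ?P = "(\<Prod>i<c. 1 - (fps_X::int fps)^(e i))"
  have "(\<Prod>i<Suc c. 1 - (fps_X::int fps)^(e i)) - 1 = (?P - 1) * (1 - fps_X^(e c)) - fps_X^(e c)"
    by (simp add: algebra_simps)
  moreover have "vb d ((?P - 1) * (1 - fps_X^(e c)))"
    using vb_mult[OF Suc.IH vb_0] Suc.prems by simp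
  moreover have "vb d (fps_X^(e c))" using Suc.prems by (simp add: vb_Xp)
  ultimately show ?case by (simp add: vb_diff)
qed

lemma V_vs_T:
  assumes a: "1 \<le> a"
  shows "vb (4*a) (Vs (2*a-1) - (\<Prod>i<a. 1 + fps_X^(4*i+3)))"
proof -
  define K where "K = 2*a-1"
  obtain a' where a': "a = Suc a'" using a by (cases a) auto
  have Kd: "K div 2 = a'" unfolding K_def a' by simp
  have K1: "(K+1) div 2 = a" "4*(K div 2) + 2 = 4*a-2" using a unfolding Kd by (auto simp: K_def a')
  have "(\<Prod>i<a. 1 + (fps_X::int fps)^(4*i+3)) = (\<Sum>c\<le>K. Tq a c)"
    unfolding prod_T using a by (intro sum.mono_neutral_left) (auto simp: K_def Tq_zero)
  then have "Vs K - (\<Prod>i<a. 1 + fps_X^(4*i+3)) = (\<Sum>c\<le>K. Wcl K c - Tq a c)"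
    by (simp add: Vs_Vcl Vcl_def sum_subtractf)
  also have "vb (4*a) \<dots>"
  proof (rule vb_sum)
    fix c assume "c \<in> {..K}"
    show "vb (4*a) (Wcl K c - Tq a c)"
    proof (cases c)
      case 0 then show ?thesis by (simp add: vb_zero)
    next
      case (Suc c')
      show ?thesis
      proof (cases "c \<le> a")
        case False
        then have z: "Tq a c = 0" by (simp add: Tq_zero)
        show ?thesis unfolding Wcl_def K1(1) z by (simp add: vb_zero)
      next
        case True
        have eq: "Wcl K c - Tq a c = Tq a (Suc c') * ((\<Prod>i<c. 1 - fps_X^(4*(K div 2)+2-4*i)) - 1)"
          unfolding Wcl_def K1(1) Suc by (simp add: algebra_simps)
        have "vb (4*a-2-4*c') ((\<Prod>i<c. 1 - (fps_X::int fps)^(4*(K div 2)+2-4*i)) - 1)"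
          by (rule prod_minus_one_vb) (use K1 Suc in auto)
        from vb_mult[OF Tq_vb this] have "vb (4*c'+3 + (4*a-2-4*c')) (Wcl K c - Tq a c)"
          unfolding eq .
        then show ?thesis by (rule vb_mono) (use True Suc in auto)
      qed
    qed
  qed
  finally show ?thesis unfolding K_def .
qed



lemma geo_split: "0 < d \<Longrightarrow> geo d = geo (2*d) * (1 + fps_X^d)"
proof -
  assume d: "0 < d"
  let ?X = "fps_X :: int fps"
  have xx: "?X^(2*d) = ?X^d * ?X^d" by (metis mult_2 power_add)
  have e: "1 - ?X^(2*d) = (1 - ?X^d) * (1 + ?X^d)"
    unfolding xx by (simp add: algebra_simps)
  have "geo d = geo d * ((1 - ?X^(2*d)) * geo (2*d))" using geo_inv[of "2*d"] d by simp
  also have "\<dots> = ((1 - ?X^d) * geo d) * (geo (2*d) * (1 + ?X^d))" unfolding e by (simp add: algebra_simps)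
  also have "\<dots> = geo (2*d) * (1 + ?X^d)" using geo_inv[OF d] by simp
  finally show ?thesis .
qed

definition Ev :: "nat \<Rightarrow> nat set" where "Ev a = {e. even e \<and> 2 \<le> e \<and> e \<le> 8*a-2}"
definition Ev' :: "nat \<Rightarrow> nat set" where "Ev' a = {e \<in> Ev a. e mod 8 \<noteq> 6}"
definition E6 :: "nat \<Rightarrow> nat set" where "E6 a = (\<lambda>i. 8*i+6) ` {..<a}"
definition O3 :: "nat \<Rightarrow> nat set" where "O3 a = (\<lambda>i. 4*i+3) ` {..<a}"
definition Aset :: "nat \<Rightarrow> nat set" where "Aset a = Ev' a \<union> O3 a"

lemma Ev_finite: "finite (Ev a)" by (rule finite_subset[of _ "{..8*a}"]) (auto simp: Ev_def)

lemma Ev_split: "Ev a = Ev' a \<union> E6 a" "Ev' a \<inter> E6 a = {}"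
proof -
  show "Ev a = Ev' a \<union> E6 a"
  proof
    show "Ev a \<subseteq> Ev' a \<union> E6 a"
    proof
      fix x assume x: "x \<in> Ev a"
      show "x \<in> Ev' a \<union> E6 a"
      proof (cases "x mod 8 = 6")
        case True
        have "x = 8*(x div 8) + 6" using True by presburger
        moreover have "x div 8 < a"
        proof (rule ccontr)
          assume "\<not> x div 8 < a"
          then have "8*a \<le> 8*(x div 8)" by simp
          then show False using x True \<open>x = 8*(x div 8) + 6\<close> by (auto simp: Ev_def)
        qed
        ultimately show ?thesis by (auto simp: E6_def)
      next
        case False then show ?thesis using x by (auto simp: Ev'_def)
      qed
    qed
    show "Ev' a \<union> E6 a \<subseteq> Ev a"
    proof
      fix x assume "x \<in> Ev' a \<union> E6 a"
      then show "x \<in> Ev a"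
      proof
        assume "x \<in> Ev' a" then show ?thesis by (auto simp: Ev'_def)
      next
        assume "x \<in> E6 a"
        then obtain i where "i < a" "x = 8*i+6" by (auto simp: E6_def)
        then show ?thesis by (auto simp: Ev_def)
      qed
    qed
  qed
  show "Ev' a \<inter> E6 a = {}" by (auto simp: Ev'_def E6_def)
qed

lemma prod_T_reindex:
  "(\<Prod>k\<in>O3 a. geo k) = (\<Prod>k\<in>E6 a. geo k) * (\<Prod>i<a. 1 + fps_X^(4*i+3))"
proof -
  have i1: "inj_on (\<lambda>i::nat. 4*i+3) {..<a}" by (auto simp: inj_on_def)
  have i2: "inj_on (\<lambda>i::nat. 8*i+6) {..<a}" by (auto simp: inj_on_def)
  have "(\<Prod>k\<in>O3 a. geo k) = (\<Prod>i<a. geo (4*i+3))"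
    unfolding O3_def by (simp add: prod.reindex[OF i1])
  also have "\<dots> = (\<Prod>i<a. geo (8*i+6) * (1 + fps_X^(4*i+3)))"
  proof (rule prod.cong[OF refl])
    fix i
    have "geo (4*i+3) = geo (2*(4*i+3)) * (1 + fps_X^(4*i+3))" by (rule geo_split) simp
    moreover have "2*(4*i+3) = 8*i+6" by simp
    ultimately show "geo (4*i+3) = geo (8*i+6) * (1 + fps_X^(4*i+3))" by simp
  qed
  also have "\<dots> = (\<Prod>i<a. geo (8*i+6)) * (\<Prod>i<a. 1 + fps_X^(4*i+3))"
    by (rule prod.distrib)
  also have "(\<Prod>i<a. geo (8*i+6)) = (\<Prod>k\<in>E6 a. geo k)"
    unfolding E6_def by (simp add: prod.reindex[OF i2])
  finally show ?thesis .
qed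

lemma GA_eq: "(\<Prod>k\<in>Aset a. geo k) = (\<Prod>e\<in>Ev a. geo e) * (\<Prod>i<a. 1 + fps_X^(4*i+3))"
proof -
  have fEv': "finite (Ev' a)" using Ev_finite by (auto simp: Ev'_def)
  have fO3: "finite (O3 a)" by (simp add: O3_def)
  have fE6: "finite (E6 a)" by (simp add: E6_def)
  have d1: "Ev' a \<inter> O3 a = {}"
  proof -
    have "\<And>i. odd (4*i+3::nat)" by presburger
    then show ?thesis by (auto simp: Ev'_def Ev_def O3_def)
  qed
  have "(\<Prod>k\<in>Aset a. geo k) = (\<Prod>k\<in>Ev' a. geo k) * (\<Prod>k\<in>O3 a. geo k)"
    unfolding Aset_def by (rule prod.union_disjoint[OF fEv' fO3 d1])
  also have "\<dots> = (\<Prod>k\<in>Ev' a. geo k) * (\<Prod>k\<in>E6 a. geo k) * (\<Prod>i<a. 1 + fps_X^(4*i+3))"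
    by (simp add: prod_T_reindex algebra_simps)
  also have "(\<Prod>k\<in>Ev' a. geo k) * (\<Prod>k\<in>E6 a. geo k) = (\<Prod>e\<in>Ev a. geo e)"
    unfolding Ev_split(1) by (rule prod.union_disjoint[symmetric, OF fEv' fE6 Ev_split(2)])
  finally show ?thesis .
qed

lemma Aset_finite: "finite (Aset a)"
  using Ev_finite by (auto simp: Aset_def Ev'_def O3_def)

lemma Aset_0: "0 \<notin> Aset a" by (auto simp: Aset_def Ev'_def Ev_def O3_def)

lemma A_set: "{p \<in> partitions n. \<forall>x\<in>#p. x mod 8 \<in> {0,2,3,4,7}} = {E. set_mset E \<subseteq> Aset (n+1) \<and> sum_mset E = n}"
proof
  show "{p \<in> partitions n. \<forall>x\<in>#p. x mod 8 \<in> {0,2,3,4,7}} \<subseteq> {E. set_mset E \<subseteq> Aset (n+1) \<and> sum_mset E = n}"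
  proof
    fix p assume p: "p \<in> {p \<in> partitions n. \<forall>x\<in>#p. x mod 8 \<in> {0,2,3,4,7}}"
    have "set_mset p \<subseteq> Aset (n+1)"
    proof
      fix x assume x: "x \<in># p"
      have pos: "0 < x" and le: "x \<le> n" and m: "x mod 8 \<in> {0,2,3,4,7}"
        using p x mem_le_sum_mset[OF x] by (auto simp: partitions_def)
      show "x \<in> Aset (n+1)"
      proof (cases "x mod 8 = 3 \<or> x mod 8 = 7")
        case True
        then have "x = 4*(x div 4)+3" by presburger
        moreover have "x div 4 < n+1" using le by auto
        ultimately show ?thesis unfolding Aset_def O3_def by blast
      next
        case False
        then have m3: "x mod 8 = 0 \<or> x mod 8 = 2 \<or> x mod 8 = 4" using m by auto
        then have "even x" by presburger
        have "x mod 8 \<noteq> 6" using m3 by auto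
        moreover have "2 \<le> x" using pos \<open>even x\<close> by presburger
        ultimately have "x \<in> Ev (n+1)" using le \<open>even x\<close> unfolding Ev_def by simp
        then have "x \<in> Ev' (n+1)" using \<open>x mod 8 \<noteq> 6\<close> unfolding Ev'_def by simp
        then show ?thesis unfolding Aset_def by blast
      qed
    qed
    then show "p \<in> {E. set_mset E \<subseteq> Aset (n+1) \<and> sum_mset E = n}" using p by (auto simp: partitions_def)
  qed
  show "{E. set_mset E \<subseteq> Aset (n+1) \<and> sum_mset E = n} \<subseteq> {p \<in> partitions n. \<forall>x\<in>#p. x mod 8 \<in> {0,2,3,4,7}}"
  proof
    fix E assume E: "E \<in> {E. set_mset E \<subseteq> Aset (n+1) \<and> sum_mset E = n}"
    have "\<forall>x\<in>#E. 0 < x \<and> x mod 8 \<in> {0,2,3,4,7}"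
    proof
      fix x assume "x \<in># E"
      then have "x \<in> Aset (n+1)" using E by auto
      then show "0 < x \<and> x mod 8 \<in> {0,2,3,4,7}"
      proof (unfold Aset_def, elim UnE)
        assume "x \<in> Ev' (n+1)"
        then have "even x" "2 \<le> x" "x mod 8 \<noteq> 6" by (auto simp: Ev'_def Ev_def)
        then have "x mod 8 = 0 \<or> x mod 8 = 2 \<or> x mod 8 = 4" by presburger
        then show ?thesis using \<open>2 \<le> x\<close> by auto
      next
        assume "x \<in> O3 (n+1)"
        then obtain i where "x = 4*i+3" by (auto simp: O3_def)
        moreover have "(4*i+3) mod 8 = 3 \<or> (4*i+3) mod 8 = (7::nat)" by presburger
        ultimately show ?thesis by auto
      qed
    qed
    then show "E \<in> {p \<in> partitions n. \<forall>x\<in>#p. x mod 8 \<in> {0,2,3,4,7}}"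
      using E unfolding partitions_def by blast
  qed
qed

lemma A_coeff: "int (A_count n) = (\<Prod>k\<in>Aset (n+1). geo k) $ n"
  unfolding A_count_def A_set coeff_prod[OF Aset_finite Aset_0] cnt_def ..

definition Bc :: "nat multiset \<Rightarrow> bool" where
  "Bc p \<longleftrightarrow> (\<forall>x\<in>#p. 2 \<le> x) \<and> (\<forall>b\<in>#p. odd b \<longrightarrow> (\<forall>c\<in>#(p - {#b#}). c \<le> b \<longrightarrow> c + 3 \<le> b))"

definition ES :: "nat \<Rightarrow> nat set \<Rightarrow> nat set" where "ES a S = Ev a - (\<lambda>b. b - 1) ` S"

definition Fam :: "nat \<Rightarrow> nat \<Rightarrow> nat set \<Rightarrow> nat multiset set" where
  "Fam n a S = {E. set_mset E \<subseteq> ES a S \<and> sum_mset E + (\<Sum>b\<in>S. b) = n}"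

lemma sum_mset_mset_set: "finite S \<Longrightarrow> sum_mset (mset_set S) = (\<Sum>b\<in>S. b)"
  by (induction S rule: finite_induct) auto

lemma ES_finite: "finite (ES a S)" using Ev_finite by (auto simp: ES_def)
lemma ES_0: "0 \<notin> ES a S" by (auto simp: ES_def Ev_def)

lemma Sf_props: "S \<in> Sf K \<Longrightarrow> x \<in> S \<Longrightarrow> odd x \<and> 3 \<le> x \<and> x \<le> 2*K+1"
  by (auto simp: Sf_def)

lemma oddpart:
  assumes "finite S" "\<forall>x\<in>S. odd x" "\<forall>x\<in>#E. even x"
  shows "filter_mset odd (mset_set S + E) = mset_set S"
proof (rule multiset_eqI)
  fix x
  show "count (filter_mset odd (mset_set S + E)) x = count (mset_set S) x"
  proof (cases "odd x")
    case True
    then have "count E x = 0" using assms(3) by (metis count_eq_zero_iff)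
    then show ?thesis using True by simp
  next
    case False
    then have "x \<notin> S" using assms(2) by auto
    then show ?thesis using False by (simp add: count_mset_set')
  qed
qed

lemma Bset_eq: "{p \<in> partitions n. Bc p} = (\<Union>S\<in>Sf (2*n+1). (\<lambda>E. mset_set S + E) ` Fam n (n+1) S)"
proof
  show "{p \<in> partitions n. Bc p} \<subseteq> (\<Union>S\<in>Sf (2*n+1). (\<lambda>E. mset_set S + E) ` Fam n (n+1) S)"
  proof
    fix p assume "p \<in> {p \<in> partitions n. Bc p}"
    then have p: "p \<in> partitions n" "Bc p" by auto
    have pos: "\<forall>x\<in>#p. 2 \<le> x" and cond: "\<forall>b\<in>#p. odd b \<longrightarrow> (\<forall>c\<in>#(p - {#b#}). c \<le> b \<longrightarrow> c + 3 \<le> b)"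
      using p(2) by (auto simp: Bc_def)
    have sp: "sum_mset p = n" using p(1) by (simp add: partitions_def)
    have le: "\<And>x. x \<in># p \<Longrightarrow> x \<le> n" using mem_le_sum_mset sp by blast
    have other: "c + 3 \<le> b" if "b \<in># p" "odd b" "c \<in># p" "c \<noteq> b" "c \<le> b" for b c
    proof -
      have "c \<in># p - {#b#}" using that by (simp add: in_diff_count)
      then show "c + 3 \<le> b" using cond that by blast
    qed
    have cnt1: "count p b = 1" if b: "b \<in># p" "odd b" for b
    proof (rule ccontr)
      assume "count p b \<noteq> 1"
      moreover have "0 < count p b" using b(1) by simp
      ultimately have "1 < count p b" by linarith
      then have "b \<in># p - {#b#}" by (simp add: in_diff_count)
      then have "b + 3 \<le> b" using cond b by blast
      then show False by simp
    qed
    define S where "S = {x. x \<in># p \<and> odd x}"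
    have fS: "finite S" unfolding S_def by (rule finite_subset[of _ "set_mset p"]) auto
    define E where "E = filter_mset even p"
    have hodd: "filter_mset odd p = mset_set S"
    proof (rule multiset_eqI)
      fix x
      show "count (filter_mset odd p) x = count (mset_set S) x"
      proof (cases "x \<in># p \<and> odd x")
        case True
        then show ?thesis using cnt1[of x] fS by (simp add: S_def count_mset_set')
      next
        case False
        then have "x \<notin> S" by (simp add: S_def)
        then show ?thesis using False fS by (auto simp: count_mset_set' not_in_iff)
      qed
    qed
    have hp: "p = mset_set S + E"
      using multiset_partition[of p odd] hodd by (simp add: E_def)
    have SSf: "S \<in> Sf (2*n+1)"
    proof -
      have "S \<subseteq> {3..2*(2*n+1)+1}"
      proof
        fix x assume x: "x \<in> S"
        then have "x \<in># p" "odd x" by (auto simp: S_def)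
        then have "2 \<le> x" "x \<le> n" "odd x" using pos le by auto
        then have "3 \<le> x" by presburger
        then show "x \<in> {3..2*(2*n+1)+1}" using \<open>x \<le> n\<close> by auto
      qed
      moreover have "\<forall>x\<in>S. odd x" by (auto simp: S_def)
      moreover have "\<forall>x\<in>S. \<forall>y\<in>S. x < y \<longrightarrow> x + 4 \<le> y"
      proof (intro ballI impI)
        fix x y assume "x \<in> S" "y \<in> S" "x < y"
        then have "x \<in># p" "y \<in># p" "odd x" "odd y" by (auto simp: S_def)
        then have "x + 3 \<le> y" using other[of y x] \<open>x < y\<close> by auto
        then show "x + 4 \<le> y" using \<open>odd x\<close> \<open>odd y\<close> by presburger
      qed
      ultimately show ?thesis by (simp add: Sf_def)
    qed
    have EF: "E \<in> Fam n (n+1) S"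
    proof -
      have "set_mset E \<subseteq> ES (n+1) S"
      proof
        fix e assume "e \<in># E"
        then have e: "e \<in># p" "even e" by (auto simp: E_def)
        then have "2 \<le> e" "e \<le> n" using pos le by auto
        then have "e \<in> Ev (n+1)" using e by (simp add: Ev_def)
        moreover have "e \<notin> (\<lambda>b. b - 1) ` S"
        proof
          assume "e \<in> (\<lambda>b. b - 1) ` S"
          then obtain b where b: "b \<in> S" "e = b - 1" by auto
          then have "b \<in># p" "odd b" by (auto simp: S_def)
          moreover have "e \<noteq> b" using e(2) \<open>odd b\<close> by auto
          moreover have "e \<le> b" using b by simp
          ultimately have "e + 3 \<le> b" using other e by blast
          then show False using b by simp
        qed
        ultimately show "e \<in> ES (n+1) S" by (simp add: ES_def)
      qed
      moreover have "sum_mset E + (\<Sum>b\<in>S. b) = n"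
        using sp hp sum_mset_mset_set[OF fS] by (metis add.commute sum_mset.union)
      ultimately show ?thesis by (simp add: Fam_def)
    qed
    show "p \<in> (\<Union>S\<in>Sf (2*n+1). (\<lambda>E. mset_set S + E) ` Fam n (n+1) S)"
      using SSf EF hp by blast
  qed
  show "(\<Union>S\<in>Sf (2*n+1). (\<lambda>E. mset_set S + E) ` Fam n (n+1) S) \<subseteq> {p \<in> partitions n. Bc p}"
  proof
    fix p assume "p \<in> (\<Union>S\<in>Sf (2*n+1). (\<lambda>E. mset_set S + E) ` Fam n (n+1) S)"
    then obtain S E where S: "S \<in> Sf (2*n+1)" and E: "E \<in> Fam n (n+1) S" and p: "p = mset_set S + E"
      by blast
    have fS: "finite S" using Sf_elem_finite[OF S] .
    have Sp: "\<And>x. x \<in> S \<Longrightarrow> odd x \<and> 3 \<le> x" using Sf_props[OF S] by blast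
    have gap: "\<And>x y. x \<in> S \<Longrightarrow> y \<in> S \<Longrightarrow> x < y \<Longrightarrow> x + 4 \<le> y" using S by (auto simp: Sf_def)
    have Ep: "\<And>x. x \<in># E \<Longrightarrow> even x \<and> 2 \<le> x \<and> x \<notin> (\<lambda>b. b - 1) ` S"
      using E by (auto simp: Fam_def ES_def Ev_def)
    have mem: "\<And>x. x \<in># p \<longleftrightarrow> x \<in> S \<or> x \<in># E" using fS by (simp add: p)
    have sum: "sum_mset p = n" using E fS by (simp add: p Fam_def sum_mset_mset_set)
    have ge2: "\<forall>x\<in>#p. 2 \<le> x" using mem Sp Ep by force
    have "\<forall>x\<in>#p. 0 < x" using ge2 by auto
    then have part: "p \<in> partitions n" using sum by (simp add: partitions_def)
    have "\<forall>b\<in>#p. odd b \<longrightarrow> (\<forall>c\<in>#(p - {#b#}). c \<le> b \<longrightarrow> c + 3 \<le> b)"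
    proof (intro ballI impI)
      fix b c assume b: "b \<in># p" "odd b" and c: "c \<in># p - {#b#}" "c \<le> b"
      have bS: "b \<in> S" using b mem Ep by blast
      have cc: "count {#b#} c < count (mset_set S) c + count E c" using c(1) by (simp add: in_diff_count p)
      show "c + 3 \<le> b"
      proof (cases "c \<in># E")
        case True
        then have "even c" "c \<noteq> b - 1" using Ep bS by auto
        then show ?thesis using c(2) b(2) by presburger
      next
        case False
        then have "count E c = 0" by (simp add: not_in_iff)
        then have "count {#b#} c < count (mset_set S) c" using cc by simp
        then have "c \<in> S" "c \<noteq> b" using fS by (auto simp: count_mset_set' split: if_splits)
        then have "c + 4 \<le> b" using gap bS c(2) by force
        then show ?thesis by simp
      qed
    qed
    then have "Bc p" using ge2 by (simp add: Bc_def)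
    then show "p \<in> {p \<in> partitions n. Bc p}" using part by simp
  qed
qed

lemma Fam_finite: "finite (Fam n a S)"
  by (rule finite_subset[OF _ fin_cnt[OF ES_0, of a S "n - (\<Sum>b\<in>S. b)"]]) (auto simp: Fam_def)

lemma card_B: "B_count n = (\<Sum>S\<in>Sf (2*n+1). card (Fam n (n+1) S))"
proof -
  have e: "{p \<in> partitions n. (\<forall>x\<in>#p. 2 \<le> x) \<and>
      (\<forall>b\<in>#p. odd b \<longrightarrow> (\<forall>c\<in>#(p - {#b#}). c \<le> b \<longrightarrow> c + 3 \<le> b))} = {p \<in> partitions n. Bc p}"
    by (simp add: Bc_def)
  have "B_count n = card (\<Union>S\<in>Sf (2*n+1). (\<lambda>E. mset_set S + E) ` Fam n (n+1) S)"
    unfolding B_count_def e Bset_eq ..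
  also have "\<dots> = (\<Sum>S\<in>Sf (2*n+1). card ((\<lambda>E. mset_set S + E) ` Fam n (n+1) S))"
  proof (rule card_UN_disjoint[OF Sf_finite])
    show "\<forall>S\<in>Sf (2*n+1). finite ((\<lambda>E. mset_set S + E) ` Fam n (n+1) S)" using Fam_finite by blast
    show "\<forall>S1\<in>Sf (2*n+1). \<forall>S2\<in>Sf (2*n+1). S1 \<noteq> S2 \<longrightarrow>
      (\<lambda>E. mset_set S1 + E) ` Fam n (n+1) S1 \<inter> (\<lambda>E. mset_set S2 + E) ` Fam n (n+1) S2 = {}"
    proof (intro ballI impI)
      fix S1 S2 assume S: "S1 \<in> Sf (2*n+1)" "S2 \<in> Sf (2*n+1)" "S1 \<noteq> S2"
      show "(\<lambda>E. mset_set S1 + E) ` Fam n (n+1) S1 \<inter> (\<lambda>E. mset_set S2 + E) ` Fam n (n+1) S2 = {}"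
      proof (rule ccontr)
        assume "(\<lambda>E. mset_set S1 + E) ` Fam n (n+1) S1 \<inter> (\<lambda>E. mset_set S2 + E) ` Fam n (n+1) S2 \<noteq> {}"
        then obtain E1 E2 where E: "E1 \<in> Fam n (n+1) S1" "E2 \<in> Fam n (n+1) S2"
          and eq: "mset_set S1 + E1 = mset_set S2 + E2" by auto
        have ev1: "\<forall>x\<in>#E1. even x" using E(1) by (auto simp: Fam_def ES_def Ev_def)
        have ev2: "\<forall>x\<in>#E2. even x" using E(2) by (auto simp: Fam_def ES_def Ev_def)
        have "mset_set S1 = mset_set S2"
          using oddpart[OF Sf_elem_finite[OF S(1)] _ ev1] oddpart[OF Sf_elem_finite[OF S(2)] _ ev2]
            Sf_props[OF S(1)] Sf_props[OF S(2)] eq by metis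
        then have "S1 = S2" using Sf_elem_finite[OF S(1)] Sf_elem_finite[OF S(2)]
          by (metis finite_set_mset_mset_set)
        then show False using S(3) by simp
      qed
    qed
  qed
  also have "\<dots> = (\<Sum>S\<in>Sf (2*n+1). card (Fam n (n+1) S))"
    by (intro sum.cong refl card_image) (simp add: inj_on_def)
  finally show ?thesis .
qed

lemma Fam_coeff: "int (card (Fam n a S)) = (fps_X^(\<Sum>b\<in>S. b) * (\<Prod>e\<in>ES a S. geo e)) $ n"
proof (cases "(\<Sum>b\<in>S. b) \<le> n")
  case True
  have "Fam n a S = {E. set_mset E \<subseteq> ES a S \<and> sum_mset E = n - (\<Sum>b\<in>S. b)}"
    using True by (auto simp: Fam_def)
  then show ?thesis using True
    by (simp add: fps_X_power_mult_nth coeff_prod[OF ES_finite ES_0] cnt_def)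
next
  case False
  have "Fam n a S = {}" using False by (auto simp: Fam_def)
  then show ?thesis using False by (simp add: fps_X_power_mult_nth)
qed

lemma Fam_alg:
  assumes S: "S \<in> Sf (2*n+1)"
  shows "fps_X^(\<Sum>b\<in>S. b) * (\<Prod>e\<in>ES (n+1) S. geo e) = (\<Prod>e\<in>Ev (n+1). geo e) * (\<Prod>b\<in>S. fps_X^b - fps_X^(2*b-1))"
proof -
  let ?X = "fps_X :: int fps"
  let ?I = "(\<lambda>b. b - 1) ` S"
  have fS: "finite S" using Sf_elem_finite[OF S] .
  have Sp: "\<And>x. x \<in> S \<Longrightarrow> odd x \<and> 3 \<le> x \<and> x \<le> 2*(2*n+1)+1" using Sf_props[OF S] by blast
  have IEv: "?I \<subseteq> Ev (n+1)"
  proof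
    fix e assume "e \<in> ?I"
    then obtain b where b: "b \<in> S" "e = b - 1" by auto
    have "odd b" "3 \<le> b" "b \<le> 4*n+3" using Sp[OF b(1)] by auto
    then have "even (b - 1)" by presburger
    then show "e \<in> Ev (n+1)" using b \<open>3 \<le> b\<close> \<open>b \<le> 4*n+3\<close> by (auto simp: Ev_def)
  qed
  have inj: "inj_on (\<lambda>b. b - 1) S"
  proof (rule inj_onI)
    fix x y assume "x \<in> S" "y \<in> S" "x - 1 = y - 1"
    then show "x = y" using Sp by force
  qed
  have "(\<Prod>e\<in>Ev (n+1). geo e) = (\<Prod>e\<in>ES (n+1) S. geo e) * (\<Prod>e\<in>?I. geo e)"
    unfolding ES_def by (rule prod.subset_diff[OF IEv Ev_finite])
  also have "(\<Prod>e\<in>?I. geo e) = (\<Prod>b\<in>S. geo (b - 1))"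
    by (rule prod.reindex[OF inj, unfolded comp_def])
  finally have P: "(\<Prod>e\<in>Ev (n+1). geo e) = (\<Prod>e\<in>ES (n+1) S. geo e) * (\<Prod>b\<in>S. geo (b - 1))" .
  have "(\<Prod>b\<in>S. geo (b - 1)) * (\<Prod>b\<in>S. ?X^b - ?X^(2*b-1)) = (\<Prod>b\<in>S. geo (b - 1) * (?X^b - ?X^(2*b-1)))"
    by (rule prod.distrib[symmetric])
  also have "\<dots> = (\<Prod>b\<in>S. ?X^b)"
  proof (rule prod.cong[OF refl])
    fix b assume "b \<in> S"
    then have b: "3 \<le> b" using Sp by blast
    have "?X^(2*b-1) = ?X^b * ?X^(b-1)" unfolding power_add[symmetric] using b
      by (intro arg_cong[where f="\<lambda>k. ?X^k"]) simp
    then have "geo (b - 1) * (?X^b - ?X^(2*b-1)) = ?X^b * ((1 - ?X^(b-1)) * geo (b - 1))"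
      by (simp add: algebra_simps)
    also have "\<dots> = ?X^b" using geo_inv[of "b - 1"] b by simp
    finally show "geo (b - 1) * (?X^b - ?X^(2*b-1)) = ?X^b" .
  qed
  also have "\<dots> = ?X^(\<Sum>b\<in>S. b)" by (simp add: power_sum)
  finally have Q: "(\<Prod>b\<in>S. geo (b - 1)) * (\<Prod>b\<in>S. ?X^b - ?X^(2*b-1)) = ?X^(\<Sum>b\<in>S. b)" .
  show ?thesis unfolding P using Q by (simp add: algebra_simps)
qed

theorem corollary17:
  shows "\<forall>n. A_count n = B_count n"
proof
  fix n
  let ?X = "fps_X :: int fps"
  define P where "P = (\<Prod>e\<in>Ev (n+1). geo e)"
  define T where "T = (\<Prod>i<n+1. 1 + ?X^(4*i+3))"
  have A: "int (A_count n) = (P * T) $ n"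
    unfolding A_coeff GA_eq P_def T_def ..
  have "int (B_count n) = (\<Sum>S\<in>Sf (2*n+1). int (card (Fam n (n+1) S)))"
    unfolding card_B by simp
  also have "\<dots> = (\<Sum>S\<in>Sf (2*n+1). (P * (\<Prod>b\<in>S. ?X^b - ?X^(2*b-1))) $ n)"
  proof (rule sum.cong[OF refl])
    fix S assume S: "S \<in> Sf (2*n+1)"
    show "int (card (Fam n (n+1) S)) = (P * (\<Prod>b\<in>S. ?X^b - ?X^(2*b-1))) $ n"
      unfolding Fam_coeff Fam_alg[OF S] P_def ..
  qed
  also have "\<dots> = (P * Vs (2*n+1)) $ n"
    by (simp add: Vs_def sum_distrib_left fps_sum_nth)
  finally have B: "int (B_count n) = (P * Vs (2*n+1)) $ n" .
  have "vb (4*(n+1)) (Vs (2*(n+1)-1) - T)" unfolding T_def by (rule V_vs_T) simp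
  then have "vb (4*(n+1)) (P * (Vs (2*n+1) - T))" by (intro vb_mult_left) simp
  then have "(P * (Vs (2*n+1) - T)) $ n = 0" unfolding vb_def by simp
  then have "(P * Vs (2*n+1)) $ n = (P * T) $ n" by (simp add: algebra_simps)
  then show "A_count n = B_count n" using A B by simp
qed

end
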